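(* Let $I\subseteq R$ be a good ideal and $a_1,\dots,a_n\in\mathbb N$, and put $l=a_1+\dots+a_n+1$. Then $I_{a_1,\dots,a_n}=I^l:\langle\mu_1^{a_1}\cdots\mu_n^{a_n}\rangle$.
   Context: Let $\mathbb K$ be a field, $R=\mathbb K[x_1,\dots,x_n]$, $\mathfrak m=\langle x_1,\dots,x_n\rangle$, $\mathbb N=\{0,1,2,\dots\}$. A monomial $x_1^{\alpha_1}\cdots x_n^{\alpha_n}$ is identified with the point $(\alpha_1,\dots,\alpha_n)\in\mathbb N^n$. For a monomial ideal $I$, $G(I)$ denotes its (unique) minimal monomial generating set. If $I$ is an $\mathfrak m$-primary monomial ideal, then for each $i$ there is a unique $d_i\ge1$ with $x_i^{d_i}\in G(I)$; write $\mu_i=x_i^{d_i}$. For $(a_1,\dots,a_n)\in\mathbb N^n$ the box associated to $I$ is $B_{a_1,\dots,a_n}=([a_1d_1,(a_1+1)d_1]\times\cdots\times[a_nd_n,(a_n+1)d_n])\cap\mathbb N^n$; a monomial belongs to a box if its exponent vector does. An $\mathfrak m$-primary monomial ideal $I$ is called good if for every integer $l\ge1$, every element of $G(I^l)$ belongs to some box $B_{a_1,\dots,a_n}$ with $a_1+\dots+a_n=l-1$. For a good ideal $I$ and $a=(a_1,\dots,a_n)\in\mathbb N^n$, with $l=a_1+\dots+a_n+1$, define $I_{a_1,\dots,a_n}=\left\langle \frac{m}{\mu_1^{a_1}\cdots\mu_n^{a_n}} : m\in B_{a_1,\dots,a_n}\cap G(I^l)\right\rangle$ (every monomial in $B_{a_1,\dots,a_n}$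 is divisible by $\mu_1^{a_1}\cdots\mu_n^{a_n}$). *)

theory Defs
  imports Main
begin

text \<open>Monomials in the variables x_i, i :: 'n (a finite index type, so n = CARD('n)),
  are identified with exponent vectors 'n \<Rightarrow> nat.  Since monomial ideals of
  K[x_1..x_n] are determined by the monomials they contain, a monomial ideal is
  represented by its set of monomials (an upward closed set of exponent vectors).\<close>

type_synonym 'n monom = "'n \<Rightarrow> nat"

definition mdvd :: "'n monom \<Rightarrow> 'n monom \<Rightarrow> bool" where
  "mdvd u v \<longleftrightarrow> (\<forall>i. u i \<le> v i)"

definition mmult :: "'n monom \<Rightarrow> 'n monom \<Rightarrow> 'n monom" where
  "mmult u v = (\<lambda>i. u i + v i)"

definition mquot :: "'n monom \<Rightarrow> 'n monom \<Rightarrow> 'n monom" where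
  "mquot u v = (\<lambda>i. u i - v i)"

definition is_monomial_ideal :: "'n monom set \<Rightarrow> bool" where
  "is_monomial_ideal I \<longleftrightarrow> (\<forall>u\<in>I. \<forall>v. mdvd u v \<longrightarrow> v \<in> I)"

definition mgen :: "'n monom set \<Rightarrow> 'n monom set" where
  "mgen G = {v. \<exists>u\<in>G. mdvd u v}"

definition mingens :: "'n monom set \<Rightarrow> 'n monom set" where
  "mingens I = {u\<in>I. \<forall>v\<in>I. mdvd v u \<longrightarrow> v = u}"

definition mideal_mult :: "'n monom set \<Rightarrow> 'n monom set \<Rightarrow> 'n monom set" where
  "mideal_mult I J = mgen {mmult u v | u v. u \<in> I \<and> v \<in> J}"

primrec mideal_pow :: "'n monom set \<Rightarrow> nat \<Rightarrow> 'n monom set" where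
  "mideal_pow I 0 = UNIV"
| "mideal_pow I (Suc l) = mideal_mult I (mideal_pow I l)"

definition mcolon :: "'n monom set \<Rightarrow> 'n monom \<Rightarrow> 'n monom set" where
  "mcolon J u = {v. mmult v u \<in> J}"

definition xpow :: "'n \<Rightarrow> nat \<Rightarrow> 'n monom" where
  "xpow i d = (\<lambda>j. if j = i then d else 0)"

text \<open>m-primary monomial ideal: proper, and contains a power of each variable
  (equivalently its radical is m).\<close>
definition m_primary :: "'n monom set \<Rightarrow> bool" where
  "m_primary I \<longleftrightarrow> is_monomial_ideal I \<and> (\<lambda>_. 0) \<notin> I \<and> (\<forall>i. \<exists>d. xpow i d \<in> I)"

definition dexp :: "'n monom set \<Rightarrow> 'n \<Rightarrow> nat" where
  "dexp I i = (THE d. 1 \<le> d \<and> xpow i d \<in> mingens I)"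

definition mupow :: "'n monom set \<Rightarrow> 'n monom \<Rightarrow> 'n monom" where
  "mupow I a = (\<lambda>i. a i * dexp I i)"

definition box :: "'n monom set \<Rightarrow> 'n monom \<Rightarrow> 'n monom set" where
  "box I a = {u. \<forall>i. a i * dexp I i \<le> u i \<and> u i \<le> (a i + 1) * dexp I i}"

definition good_ideal :: "('n::finite) monom set \<Rightarrow> bool" where
  "good_ideal I \<longleftrightarrow> m_primary I \<and>
     (\<forall>l\<ge>1. \<forall>m\<in>mingens (mideal_pow I l).
        \<exists>a. (\<Sum>i\<in>UNIV. a i) = l - 1 \<and> m \<in> box I a)"

definition I_sub :: "('n::finite) monom set \<Rightarrow> 'n monom \<Rightarrow> 'n monom set" where
  "I_sub I a = mgen {mquot m (mupow I a) | m.
      m \<in> box I a \<and> m \<in> mingens (mideal_pow I ((\<Sum>i\<in>UNIV. a i) + 1))}"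

end

theory Submission
  imports Defs Complex_Main
begin

lemma mdvd_refl: "mdvd u u" by (simp add: mdvd_def)
lemma mdvd_trans: "mdvd u v \<Longrightarrow> mdvd v w \<Longrightarrow> mdvd u w"
  unfolding mdvd_def using le_trans by blast

lemma mgen_up: "u \<in> mgen G \<Longrightarrow> mdvd u v \<Longrightarrow> v \<in> mgen G"
  unfolding mgen_def using mdvd_trans by blast

lemma mgen_sub: "u \<in> G \<Longrightarrow> u \<in> mgen G"
  unfolding mgen_def using mdvd_refl by blast

lemma pow_Suc_up: "u \<in> mideal_pow I (Suc l) \<Longrightarrow> mdvd u v \<Longrightarrow> v \<in> mideal_pow I (Suc l)"
  by (simp add: mideal_mult_def mgen_up)

lemma mingens_below:
  fixes v :: "('n::finite) monom"
  assumes "v \<in> S" shows "\<exists>m\<in>mingens S. mdvd m v"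
  using assms
proof (induction "sum v UNIV" arbitrary: v rule: less_induct)
  case less
  show ?case
  proof (cases "v \<in> mingens S")
    case True then show ?thesis using mdvd_refl by blast
  next
    case False
    then obtain u where u: "u \<in> S" "mdvd u v" "u \<noteq> v" using less.prems unfolding mingens_def by blast
    then obtain x where "u x \<noteq> v x" by blast
    with u(2) have "u x < v x" unfolding mdvd_def by (meson le_neq_implies_less)
    then have "sum u UNIV < sum v UNIV"
      using u(2) unfolding mdvd_def by (intro sum_strict_mono_ex1) auto
    with less.hyps u(1) obtain m where "m \<in> mingens S" "mdvd m u" by blast
    then show ?thesis using u(2) mdvd_trans by blast
  qed
qed

lemma dexp_props:
  assumes "m_primary I"
  shows "1 \<le> dexp I i \<and> xpow i (dexp I i) \<in> mingens I"
proof -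
  from assms obtain d where d: "xpow i d \<in> I" unfolding m_primary_def by blast
  define d0 where "d0 = (LEAST d. xpow i d \<in> I)"
  have in0: "xpow i d0 \<in> I" unfolding d0_def using d by (rule LeastI)
  have least: "\<And>d'. xpow i d' \<in> I \<Longrightarrow> d0 \<le> d'" unfolding d0_def by (rule Least_le)
  have ming: "xpow i d0 \<in> mingens I"
    unfolding mingens_def
  proof (safe intro!: in0)
    fix v assume v: "v \<in> I" "mdvd v (xpow i d0)"
    have "v = xpow i (v i)"
      using v(2) by (auto simp: mdvd_def xpow_def fun_eq_iff) (metis le_zero_eq)
    with v(1) have "d0 \<le> v i" using least by metis
    moreover have "v i \<le> d0" using v(2) by (simp add: mdvd_def xpow_def) (metis)
    ultimately show "v = xpow i d0" using \<open>v = xpow i (v i)\<close> by simp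
  qed
  have pos: "1 \<le> d0"
  proof (rule ccontr)
    assume "\<not> 1 \<le> d0"
    then have "d0 = 0" by simp
    then have "xpow i d0 = (\<lambda>_. 0)" by (simp add: xpow_def fun_eq_iff)
    with in0 assms show False unfolding m_primary_def by simp
  qed
  have "dexp I i = d0"
    unfolding dexp_def
  proof (rule the_equality)
    show "1 \<le> d0 \<and> xpow i d0 \<in> mingens I" using pos ming by simp
  next
    fix d' assume h: "1 \<le> d' \<and> xpow i d' \<in> mingens I"
    then have "xpow i d' \<in> I" unfolding mingens_def by blast
    then have "d0 \<le> d'" by (rule least)
    then have "mdvd (xpow i d0) (xpow i d')" by (simp add: mdvd_def xpow_def)
    with h in0 have "xpow i d0 = xpow i d'" unfolding mingens_def by blast
    then show "d' = d0" by (metis xpow_def)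
  qed
  then show ?thesis using pos ming by simp
qed

lemma dexp_pos: "m_primary I \<Longrightarrow> 0 < dexp I i"
  using dexp_props[of I i] by simp

lemma xpow_in: "m_primary I \<Longrightarrow> xpow i (dexp I i) \<in> I"
  using dexp_props[of I i] unfolding mingens_def by blast

lemma scale_in_pow:
  assumes "u \<in> I" shows "(\<lambda>i. k * u i) \<in> mideal_pow I k"
proof (induction k)
  case 0 then show ?case by simp
next
  case (Suc k)
  have "(\<lambda>i. Suc k * u i) = mmult u (\<lambda>i. k * u i)" by (simp add: mmult_def)
  then show ?case using assms Suc unfolding mideal_pow.simps mideal_mult_def
    by (intro mgen_sub) auto
qed

definition NN :: "('n::finite) monom set \<Rightarrow> 'n monom \<Rightarrow> real" where
  "NN I u = (\<Sum>i\<in>UNIV. real (u i) / real (dexp I i))"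

lemma NN_mono: "mdvd u v \<Longrightarrow> NN I u \<le> NN I v"
  unfolding NN_def mdvd_def by (intro sum_mono divide_right_mono) auto

lemma NN_mmult: "NN I (mmult u v) = NN I u + NN I v"
  unfolding NN_def mmult_def by (simp add: add_divide_distrib sum.distrib)

lemma NN_ge1:
  fixes I :: "('n::finite) monom set"
  assumes g: "good_ideal I" and u: "u \<in> I"
  shows "NN I u \<ge> 1"
proof -
  have mp: "m_primary I" using g unfolding good_ideal_def by simp
  have key: "real k - 1 \<le> real k * NN I u" if k: "k \<ge> 1" for k :: nat
  proof -
    have "(\<lambda>i. k * u i) \<in> mideal_pow I k" using u by (rule scale_in_pow)
    then obtain M where M: "M \<in> mingens (mideal_pow I k)" "mdvd M (\<lambda>i. k * u i)"
      using mingens_below by blast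
    with g k obtain B where B: "sum B UNIV = k - 1" "M \<in> box I B"
      unfolding good_ideal_def by blast
    have "real (B i) \<le> real k * (real (u i) / real (dexp I i))" for i
    proof -
      have "B i * dexp I i \<le> M i" using B(2) unfolding box_def by blast
      also have "M i \<le> k * u i" using M(2) unfolding mdvd_def by blast
      finally have "B i * dexp I i \<le> k * u i" .
      then have "real (B i) * real (dexp I i) \<le> real k * real (u i)"
        by (metis of_nat_le_iff of_nat_mult)
      moreover have "real (dexp I i) > 0" using dexp_pos[OF mp] by simp
      ultimately show ?thesis by (simp add: field_simps)
    qed
    then have "(\<Sum>i\<in>UNIV. real (B i)) \<le> (\<Sum>i\<in>UNIV. real k * (real (u i) / real (dexp I i)))"
      by (intro sum_mono) auto
    also have "\<dots> = real k * NN I u" unfolding NN_def by (simp add: sum_distrib_left)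
    finally have "real (sum B UNIV) \<le> real k * NN I u" by simp
    with B(1) k show ?thesis by simp
  qed
  show ?thesis
  proof (rule ccontr)
    assume "\<not> 1 \<le> NN I u"
    then have e: "1 - NN I u > 0" by simp
    obtain k :: nat where kk: "1 / (1 - NN I u) < real k" using reals_Archimedean2 by blast
    have "0 < 1 / (1 - NN I u)" using e by simp
    with kk have "0 < real k" by linarith
    then have "k \<ge> 1" by simp
    from key[OF this] have "real k * (1 - NN I u) \<le> 1" by (simp add: algebra_simps)
    moreover from kk e have "1 < real k * (1 - NN I u)" by (simp add: field_simps)
    ultimately show False by simp
  qed
qed

lemma NN_pow:
  fixes I :: "('n::finite) monom set"
  assumes g: "good_ideal I"
  shows "v \<in> mideal_pow I k \<Longrightarrow> NN I v \<ge> real k"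
proof (induction k arbitrary: v)
  case 0
  show ?case unfolding NN_def by (simp add: sum_nonneg)
next
  case (Suc k)
  then obtain x y where xy: "x \<in> I" "y \<in> mideal_pow I k" "mdvd (mmult x y) v"
    unfolding mideal_pow.simps mideal_mult_def mgen_def by blast
  have "real (Suc k) \<le> NN I x + NN I y" using NN_ge1[OF g xy(1)] Suc.IH[OF xy(2)] by simp
  also have "\<dots> = NN I (mmult x y)" by (simp add: NN_mmult)
  also have "\<dots> \<le> NN I v" using xy(3) by (rule NN_mono)
  finally show ?case .
qed

lemma mu_in_pow:
  fixes I :: "('n::finite) monom set"
  assumes mp: "m_primary I"
  shows "sum c UNIV = k \<Longrightarrow> mupow I c \<in> mideal_pow I k"
proof (induction k arbitrary: c)
  case 0
  then show ?case by simp
next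
  case (Suc k)
  then obtain i where ci: "c i > 0"
    by (metis Zero_not_Suc gr0I sum.neutral)
  define c' where "c' = (\<lambda>j. c j - (if j = i then 1 else 0))"
  have cc: "c = (\<lambda>j. c' j + (if j = i then 1 else 0))" using ci by (auto simp: c'_def fun_eq_iff)
  have "sum c UNIV = sum c' UNIV + 1"
    by (subst cc) (simp add: sum.distrib)
  with Suc.prems have "sum c' UNIV = k" by simp
  then have in': "mupow I c' \<in> mideal_pow I k" by (rule Suc.IH)
  have "mupow I c = mmult (xpow i (dexp I i)) (mupow I c')"
    by (subst cc) (auto simp: mupow_def mmult_def xpow_def fun_eq_iff algebra_simps)
  then show ?case using in' xpow_in[OF mp] unfolding mideal_pow.simps mideal_mult_def
    by (intro mgen_sub) auto
qed

theorem mainTheorem4: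
  fixes I :: "('n::finite) monom set" and a :: "'n monom"
  assumes "good_ideal I"
  shows "I_sub I a = mcolon (mideal_pow I ((\<Sum>i\<in>UNIV. a i) + 1)) (mupow I a)"
proof -
  have g: "good_ideal I" using assms .
  have mp: "m_primary I" using g unfolding good_ideal_def by simp
  define L where "L = (\<Sum>i\<in>UNIV. a i) + 1"
  define J where "J = mideal_pow I L"
  define mu where "mu = mupow I a"
  have Jup: "u \<in> J \<Longrightarrow> mdvd u v \<Longrightarrow> v \<in> J" for u v
    unfolding J_def L_def using pow_Suc_up by simp
  have "I_sub I a = mcolon J mu"
  proof (intro equalityI subsetI)
    fix x assume "x \<in> I_sub I a"
    then obtain m where m: "m \<in> box I a" "m \<in> mingens J" "mdvd (mquot m mu) x"
      unfolding I_sub_def mgen_def J_def L_def mu_def by blast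
    have "mdvd m (mmult x mu)" using m(3) unfolding mdvd_def mquot_def mmult_def
      by (auto simp: le_diff_conv)
    moreover have "m \<in> J" using m(2) unfolding mingens_def by blast
    ultimately show "x \<in> mcolon J mu" unfolding mcolon_def using Jup by blast
  next
    fix x assume "x \<in> mcolon J mu"
    then have w: "mmult x mu \<in> J" unfolding mcolon_def by simp
    then obtain M where M: "M \<in> mingens J" "mdvd M (mmult x mu)" using mingens_below by blast
    with g obtain c where c: "sum c UNIV = L - 1" "M \<in> box I c"
      unfolding good_ideal_def J_def L_def by fastforce
    have sc: "sum c UNIV = sum a UNIV" using c(1) unfolding L_def by simp
    show "x \<in> I_sub I a"
    proof (cases "\<exists>i. a i < c i")
      case False
      have "c = a"
      proof (rule ccontr)
        assume "c \<noteq> a"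
        then obtain j where "c j \<noteq> a j" by blast
        with False have "c j < a j" by (meson linorder_neqE_nat)
        then have "sum c UNIV < sum a UNIV" using False
          by (intro sum_strict_mono_ex1) (auto simp: not_less)
        with sc show False by simp
      qed
      with c have "M \<in> box I a" by simp
      moreover have "mdvd (mquot M mu) x" using M(2) unfolding mdvd_def mquot_def mmult_def
        by (auto simp: le_diff_conv)
      ultimately show ?thesis using M(1) unfolding I_sub_def mgen_def J_def L_def mu_def by blast
    next
      case True
      then obtain i where ci: "a i < c i" by blast
      define a' where "a' = (\<lambda>j. a j + (if j = i then 1 else 0))"
      have sa': "sum a' UNIV = L" unfolding a'_def L_def by (simp add: sum.distrib)
      define m' where "m' = mupow I a'"
      have m'J: "m' \<in> J" unfolding m'_def J_def using mu_in_pow[OF mp sa'] .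
      have NNm': "NN I m' = real L"
      proof -
        have "NN I m' = (\<Sum>j\<in>UNIV. real (a' j))"
          unfolding NN_def m'_def mupow_def using dexp_pos[OF mp]
          by (intro sum.cong) auto
        then show ?thesis using sa' by (metis of_nat_sum)
      qed
      have m'min: "m' \<in> mingens J"
        unfolding mingens_def
      proof (safe intro!: m'J)
        fix v assume v: "v \<in> J" "mdvd v m'"
        show "v = m'"
        proof (rule ccontr)
          assume "v \<noteq> m'"
          then obtain j where "v j \<noteq> m' j" by blast
          with v(2) have lt: "v j < m' j" unfolding mdvd_def by (meson le_neq_implies_less)
          have "NN I v < NN I m'"
            unfolding NN_def
          proof (rule sum_strict_mono_ex1)
            show "\<forall>x\<in>UNIV. real (v x) / real (dexp I x) \<le> real (m' x) / real (dexp I x)"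
              using v(2) unfolding mdvd_def by (auto intro: divide_right_mono)
            show "\<exists>x\<in>UNIV. real (v x) / real (dexp I x) < real (m' x) / real (dexp I x)"
              using lt dexp_pos[OF mp, of j] by (auto intro!: bexI[of _ j] divide_strict_right_mono)
          qed simp
          moreover have "NN I v \<ge> real L" using NN_pow[OF g] v(1) unfolding J_def by blast
          ultimately show False using NNm' by simp
        qed
      qed
      have m'box: "m' \<in> box I a"
        unfolding box_def m'_def mupow_def a'_def by auto
      have "c i * dexp I i \<le> M i" using c(2) unfolding box_def by blast
      moreover have "(a i + 1) * dexp I i \<le> c i * dexp I i" using ci by (intro mult_right_mono) auto
      moreover have "M i \<le> x i + a i * dexp I i" using M(2) unfolding mdvd_def mmult_def mu_def mupow_def by auto
      ultimately have xi: "dexp I i \<le> x i" by simp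
      have "mdvd (mquot m' mu) x"
        unfolding mdvd_def mquot_def m'_def mu_def mupow_def a'_def using xi by auto
      then show ?thesis using m'min m'box unfolding I_sub_def mgen_def J_def L_def mu_def by blast
    qed
  qed
  then show ?thesis unfolding J_def L_def mu_def .
qed

end
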